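(* For every finite abelian group $F$, the real linear span of the image of the correlation map satisfies \[\mathrm{span}_{\mathbb R}\big(A_F(G_F)\big)=\mathbb R^F_{\rm ev}:=\{h\in\mathbb R^F\mid h_{-f}=h_f\ \text{for all } f\in F\}.\]
   Context: Let $F$ be a finite abelian group, written additively, and $G_F=\{-1,1\}^F$. The correlation map $A_F:G_F\to\mathbb Z^F\subseteq\mathbb R^F$ is $A_F(\sigma)_f=\sum_{\ell\in F}\sigma_\ell\sigma_{\ell+f}$. *)

theory Defs
  imports "HOL-Analysis.Analysis"
begin

definition sign_vectors :: "('a::{finite,ab_group_add} \<Rightarrow> int) set" where
  "sign_vectors = {\<sigma>. \<forall>l. \<sigma> l \<in> {-1, 1}}"

definition correlation :: "('a::{finite,ab_group_add} \<Rightarrow> int) \<Rightarrow> real ^ ('a::{finite,ab_group_add})" where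
  "correlation \<sigma> = (\<chi> f. of_int (\<Sum>l\<in>UNIV. \<sigma> l * \<sigma> (l + f)))"

definition even_vectors :: "(real ^ ('a::{finite,ab_group_add})) set" where
  "even_vectors = {h. \<forall>f. h $ (- f) = h $ f}"

end

theory Submission
  imports Defs
begin

definition dd :: "'a::{finite,ab_group_add} \<Rightarrow> 'a \<Rightarrow> int" where
  "dd a l = (if l = a then 1 else 0)"

lemma sum_dd: "(\<Sum>l\<in>UNIV. dd a l * dd b (l+g)) = (if a + g = b then 1 else 0)"
proof -
  have "(\<Sum>l\<in>UNIV. dd a l * dd b (l+g)) = (\<Sum>l\<in>UNIV. if l = a then (if a+g=b then 1 else 0) else (0::int))"
    by (rule sum.cong) (auto simp: dd_def)
  also have "\<dots> = (if a+g=b then 1 else 0)" by simp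
  finally show ?thesis .
qed

lemma sum_shift: "(\<Sum>l\<in>UNIV. (x::'a::{finite,ab_group_add} \<Rightarrow> int) (l+g)) = (\<Sum>l\<in>UNIV. x l)"
  by (rule sum.reindex_bij_witness[of _ "\<lambda>l. l - g" "\<lambda>l. l + g"]) auto

lemma corr_formula:
  fixes x :: "'a::{finite,ab_group_add} \<Rightarrow> int"
  shows "correlation (\<lambda>l. 1 - 2 * x l) $ g = real CARD('a) - 4 * of_int (\<Sum>l\<in>UNIV. x l) + 4 * of_int (\<Sum>l\<in>UNIV. x l * x (l+g))"
proof -
  have "(\<Sum>l\<in>UNIV. (1 - 2 * x l) * (1 - 2 * x (l+g))) = (\<Sum>l\<in>UNIV. 1 - 2*x l - 2*x(l+g) + 4*(x l * x(l+g)))"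
    by (rule sum.cong) (auto simp: algebra_simps)
  also have "\<dots> = int CARD('a) - 2 * (\<Sum>l\<in>UNIV. x l) - 2*(\<Sum>l\<in>UNIV. x (l+g)) + 4*(\<Sum>l\<in>UNIV. x l * x (l+g))"
    by (simp add: sum.distrib sum_subtractf sum_distrib_left)
  also have "\<dots> = int CARD('a) - 4 * (\<Sum>l\<in>UNIV. x l) + 4*(\<Sum>l\<in>UNIV. x l * x (l+g))"
    using sum_shift[of x g] by simp
  finally have eq: "(\<Sum>l\<in>UNIV. (1 - 2 * x l) * (1 - 2 * x (l+g))) = int CARD('a) - 4 * (\<Sum>l\<in>UNIV. x l) + 4*(\<Sum>l\<in>UNIV. x l * x (l+g))" .
  have "correlation (\<lambda>l. 1 - 2 * x l) $ g = real_of_int (\<Sum>l\<in>UNIV. (1 - 2 * x l) * (1 - 2 * x (l+g)))"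
    by (simp only: correlation_def vec_lambda_beta)
  also have "\<dots> = real_of_int (int CARD('a) - 4 * (\<Sum>l\<in>UNIV. x l) + 4*(\<Sum>l\<in>UNIV. x l * x (l+g)))"
    by (simp only: eq)
  finally show ?thesis by simp
qed

lemma sum_dd1: "(\<Sum>l\<in>UNIV. dd a l) = 1"
  by (simp add: dd_def)

lemma sign_mem: "(\<forall>l. x l \<in> {0,1}) \<Longrightarrow> (\<lambda>l. 1 - 2 * x l) \<in> sign_vectors"
  unfolding sign_vectors_def by auto

theorem mainTheorem3:
  shows "span (correlation ` (sign_vectors :: ('a::{finite,ab_group_add} \<Rightarrow> int) set)) = (even_vectors :: (real ^ ('a::{finite,ab_group_add})) set)"
proof
  let ?S = "correlation ` (sign_vectors :: ('a::{finite,ab_group_add} \<Rightarrow> int) set)"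
  show "span ?S \<subseteq> even_vectors"
  proof (rule span_minimal)
    show "?S \<subseteq> even_vectors"
    proof
      fix h assume "h \<in> ?S"
      then obtain \<sigma> where h: "h = correlation \<sigma>" by auto
      have "(\<Sum>l\<in>UNIV. \<sigma> l * \<sigma> (l + - f)) = (\<Sum>l\<in>UNIV. \<sigma> l * \<sigma> (l+f))" for f
        by (rule sum.reindex_bij_witness[of _ "\<lambda>l. l + f" "\<lambda>l. l - f"]) (auto simp: algebra_simps)
      then show "h \<in> even_vectors" unfolding h even_vectors_def correlation_def by (simp del: of_int_sum of_int_mult)
    qed
    show "subspace (even_vectors :: (real ^ ('a::{finite,ab_group_add})) set)"
      unfolding subspace_def even_vectors_def by simp
  qed
  show "even_vectors \<subseteq> span ?S"
  proof
    define one :: "real ^ ('a::{finite,ab_group_add})" where "one = (\<chi> g. 1)"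
    define d0 :: "real ^ ('a::{finite,ab_group_add})" where "d0 = (\<chi> g. if g = 0 then 1 else 0)"
    define e :: "'a \<Rightarrow> real ^ ('a::{finite,ab_group_add})" where "e f = (\<chi> g. (if g = f then 1 else 0) + (if g = - f then 1 else 0))" for f
    have N: "real CARD('a) \<noteq> 0" by simp
    have C0: "correlation (\<lambda>l::('a::{finite,ab_group_add}). 1 - 2 * 0) = real CARD('a) *\<^sub>R one"
      unfolding vec_eq_iff one_def using corr_formula[of "\<lambda>_::'a. 0"] by simp
    have mem: "correlation (\<lambda>l::('a::{finite,ab_group_add}). 1 - 2 * x l) \<in> span ?S" if "\<forall>l. x l \<in> {0,1}" for x
      by (rule span_base, rule imageI, rule sign_mem) (use that in simp)
    have one_in: "one \<in> span ?S"
    proof -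
      have "correlation (\<lambda>l::('a::{finite,ab_group_add}). 1 - 2 * 0) \<in> span ?S"
        using mem[of "\<lambda>_. 0"] by simp
      then have "(1 / real CARD('a)) *\<^sub>R correlation (\<lambda>l::('a::{finite,ab_group_add}). 1 - 2 * 0) \<in> span ?S"
        by (rule span_scale)
      then show ?thesis using C0 N by simp
    qed
    have C1: "correlation (\<lambda>l. 1 - 2 * dd 0 l) = (real CARD('a) - 4) *\<^sub>R one + 4 *\<^sub>R d0"
      unfolding vec_eq_iff one_def d0_def
      using corr_formula[of "dd (0::'a)"] sum_dd[of "0::'a" 0] sum_dd1[of "0::'a"] by auto
    have d0_in: "d0 \<in> span ?S"
    proof -
      have "correlation (\<lambda>l. 1 - 2 * dd (0::'a) l) \<in> span ?S"
        by (rule mem) (simp add: dd_def)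
      then have "(1/4) *\<^sub>R correlation (\<lambda>l. 1 - 2 * dd (0::'a) l) - ((real CARD('a) - 4)/4) *\<^sub>R one \<in> span ?S"
        using one_in by (intro span_diff span_scale)
      also have "(1/4) *\<^sub>R correlation (\<lambda>l. 1 - 2 * dd (0::'a) l) - ((real CARD('a) - 4)/4) *\<^sub>R one = d0"
        unfolding C1 vec_eq_iff one_def d0_def by (simp add: field_simps)
      finally show ?thesis .
    qed
    have e_in: "e f \<in> span ?S" for f
    proof (cases "f = 0")
      case True
      then have "e f = 2 *\<^sub>R d0" unfolding e_def d0_def vec_eq_iff by simp
      then show ?thesis using d0_in by (simp add: span_scale)
    next
      case False
      define x where "x l = dd 0 l + dd f l" for l
      have x01: "\<forall>l. x l \<in> {0,1}" using False by (simp add: x_def dd_def)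
      have sx: "(\<Sum>l\<in>UNIV. x l) = 2" by (simp add: x_def sum.distrib sum_dd1)
      have sxx: "(\<Sum>l\<in>UNIV. x l * x (l+g)) = (if g = 0 then 2 else 0) + (if g = f then 1 else 0) + (if g = -f then 1 else 0)" for g
      proof -
        have h1: "(f + g = 0) = (g = -f)" by (metis add.commute eq_neg_iff_add_eq_0)
        have "(\<Sum>l\<in>UNIV. x l * x (l+g)) = (\<Sum>l\<in>UNIV. dd 0 l * dd 0 (l+g) + dd 0 l * dd f (l+g) + dd f l * dd 0 (l+g) + dd f l * dd f (l+g))"
          by (simp add: x_def algebra_simps)
        also have "\<dots> = (if 0 + g = 0 then 1 else 0) + (if 0 + g = f then 1 else 0) + (if f + g = 0 then 1 else 0) + (if f + g = f then 1 else 0)"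
          by (simp only: sum.distrib sum_dd)
        also have "\<dots> = (if g = 0 then 2 else 0) + (if g = f then 1 else 0) + (if g = -f then 1 else 0)"
          using h1 by simp
        finally show ?thesis .
      qed
      have C2: "correlation (\<lambda>l. 1 - 2 * x l) = (real CARD('a) - 8) *\<^sub>R one + 8 *\<^sub>R d0 + 4 *\<^sub>R e f"
        unfolding vec_eq_iff one_def d0_def e_def
        using corr_formula[of x] sx sxx by auto
      have "(1/4) *\<^sub>R correlation (\<lambda>l. 1 - 2 * x l) - ((real CARD('a) - 8)/4) *\<^sub>R one - 2 *\<^sub>R d0 \<in> span ?S"
        using one_in d0_in mem[OF x01] by (intro span_diff span_scale)
      also have "(1/4) *\<^sub>R correlation (\<lambda>l. 1 - 2 * x l) - ((real CARD('a) - 8)/4) *\<^sub>R one - 2 *\<^sub>R d0 = e f"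
        unfolding C2 vec_eq_iff one_def d0_def e_def by (simp add: field_simps)
      finally show ?thesis .
    qed
    fix h :: "real ^ ('a::{finite,ab_group_add})"
    assume "h \<in> even_vectors"
    hence hev: "h $ (-f) = h $ f" for f by (simp add: even_vectors_def)
    have "h = (\<Sum>f\<in>UNIV. (h$f/2) *\<^sub>R e f)"
    proof (subst vec_eq_iff, intro allI)
      fix g
      have "(\<Sum>f\<in>UNIV. (h$f/2) *\<^sub>R e f) $ g = (\<Sum>f\<in>UNIV. (h$f/2) * ((if g = f then 1 else 0) + (if g = - f then 1 else 0)))"
        by (simp add: e_def)
      also have "\<dots> = (\<Sum>f\<in>UNIV. if f = g then h$f/2 else 0) + (\<Sum>f\<in>UNIV. if f = -g then h$f/2 else 0)"
      proof -
        have "(\<Sum>f\<in>UNIV. (h$f/2) * ((if g = f then 1 else 0) + (if g = - f then 1 else 0))) = (\<Sum>f\<in>UNIV. (if f = g then h$f/2 else 0) + (if f = -g then h$f/2 else 0))"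
          by (rule sum.cong) auto
        then show ?thesis by (simp only: sum.distrib)
      qed
      also have "\<dots> = h $ g"
        using hev[of g] by simp
      finally show "h $ g = (\<Sum>f\<in>UNIV. (h$f/2) *\<^sub>R e f) $ g" by simp
    qed
    also have "\<dots> \<in> span ?S"
      by (intro span_sum span_scale e_in)
    finally show "h \<in> span ?S" .
  qed
qed

end
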